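(* Let $k$ be a field, $H$ a $k$-coalgebra, $X$ a global $H$-comodule regarded as a partial comodule datum $(X,X\otimes H,\mathrm{id}_{X\otimes H},\rho_X)$, and let $(Y,Y\bullet H,\pi_Y,\rho_Y)$ be a partial subcomodule of $X$. Then $Y$ is again global, i.e. $\pi_Y$ is an isomorphism.
   Context: A partial comodule datum over $H$ (in $k$-vector spaces) is a quadruple $(Y,Y\bullet H,\pi_Y,\rho_Y)$ with $\pi_Y:Y\otimes H\to Y\bullet H$ a surjective linear map and $\rho_Y:Y\to Y\bullet H$ linear. A morphism of partial comodule data $Y\to X$ is a pair $(f,f\bullet H)$ of linear maps $f:Y\to X$, $f\bullet H:Y\bullet H\to X\bullet H$ with $(f\bullet H)\rho_Y=\rho_Xf$ and $(f\bullet H)\pi_Y=\pi_X(f\otimes H)$. A partial subcomodule of $X$ is a partial comodule datum $Y$ together with a morphism $(f,f\bullet H):Y\to X$ such that both $f$ and $f\bullet H$ are injective. A partial comodule datum is called global when its map $\pi$ is an isomorphism. *)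

theory Defs
  imports Main "HOL.Vector_Spaces" "HOL-Library.Poly_Mapping"
begin

text \<open>A k-vector space is a type 'v::ab_group_add with a scalar multiplication
  s :: 'k \<Rightarrow> 'v \<Rightarrow> 'v satisfying vector_space s (HOL.Vector_Spaces);
  linear maps are Vector_Spaces.linear.\<close>

text \<open>Free vector space on a set A: finitely supported functions A \<Rightarrow>0 k.\<close>

definition delta :: "'a \<Rightarrow> 'a \<Rightarrow>\<^sub>0 'k::zero_neq_one" where
  "delta x = Poly_Mapping.single x 1"

definition fscale :: "'k::field \<Rightarrow> ('a \<Rightarrow>\<^sub>0 'k) \<Rightarrow> ('a \<Rightarrow>\<^sub>0 'k)" where
  "fscale c p = Poly_Mapping.map ((*) c) p"

definition tensor_rels ::
  "('k::field \<Rightarrow> 'v::ab_group_add \<Rightarrow> 'v) \<Rightarrow> ('k \<Rightarrow> 'w::ab_group_add \<Rightarrow> 'w)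
   \<Rightarrow> ('v \<times> 'w \<Rightarrow>\<^sub>0 'k) set" where
  "tensor_rels sV sW =
     {delta (v + v', w) - delta (v, w) - delta (v', w) | v v' w. True} \<union>
     {delta (v, w + w') - delta (v, w) - delta (v, w') | v w w'. True} \<union>
     {delta (sV c v, w) - fscale c (delta (v, w)) | c v w. True} \<union>
     {delta (v, sW c w) - fscale c (delta (v, w)) | c v w. True}"

text \<open>(T, q) is a tensor product of V and W: T is (isomorphic to) the quotient
  of the free vector space on V \<times> W by the span of the bilinearity relations,
  with q the quotient map; the elementary tensor v \<otimes> w is q (delta (v, w)).\<close>

definition is_tensor_product ::
  "('k::field \<Rightarrow> 'v::ab_group_add \<Rightarrow> 'v) \<Rightarrow> ('k \<Rightarrow> 'w::ab_group_add \<Rightarrow> 'w)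
   \<Rightarrow> ('k \<Rightarrow> 't::ab_group_add \<Rightarrow> 't) \<Rightarrow> (('v \<times> 'w \<Rightarrow>\<^sub>0 'k) \<Rightarrow> 't) \<Rightarrow> bool" where
  "is_tensor_product sV sW sT q \<longleftrightarrow>
     vector_space sV \<and> vector_space sW \<and>
     Vector_Spaces.linear fscale sT q \<and> surj q \<and>
     (\<forall>p. q p = 0 \<longleftrightarrow> p \<in> module.span fscale (tensor_rels sV sW))"

definition tensor_lift ::
  "('k::field \<Rightarrow> 't::ab_group_add \<Rightarrow> 't) \<Rightarrow> ('k \<Rightarrow> 'u::ab_group_add \<Rightarrow> 'u)
   \<Rightarrow> (('v \<times> 'w \<Rightarrow>\<^sub>0 'k) \<Rightarrow> 't) \<Rightarrow> ('v \<Rightarrow> 'w \<Rightarrow> 'u) \<Rightarrow> 't \<Rightarrow> 'u" where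
  "tensor_lift sT sU q \<beta> =
     (THE F. Vector_Spaces.linear sT sU F \<and> (\<forall>v w. F (q (delta (v, w))) = \<beta> v w))"

definition tensor_map ::
  "('k::field \<Rightarrow> 't1::ab_group_add \<Rightarrow> 't1) \<Rightarrow> ('k \<Rightarrow> 't2::ab_group_add \<Rightarrow> 't2)
   \<Rightarrow> (('v1 \<times> 'w1 \<Rightarrow>\<^sub>0 'k) \<Rightarrow> 't1) \<Rightarrow> (('v2 \<times> 'w2 \<Rightarrow>\<^sub>0 'k) \<Rightarrow> 't2)
   \<Rightarrow> ('v1 \<Rightarrow> 'v2) \<Rightarrow> ('w1 \<Rightarrow> 'w2) \<Rightarrow> 't1 \<Rightarrow> 't2" where
  "tensor_map sT1 sT2 q1 q2 f g = tensor_lift sT1 sT2 q1 (\<lambda>v w. q2 (delta (f v, g w)))"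

text \<open>The associator (U \<otimes> V) \<otimes> W \<rightarrow> U \<otimes> (V \<otimes> W), (u \<otimes> v) \<otimes> w \<mapsto> u \<otimes> (v \<otimes> w).
  qUV : U \<otimes> V,  qA : (U \<otimes> V) \<otimes> W,  qVW : V \<otimes> W,  qB : U \<otimes> (V \<otimes> W).\<close>

definition tensor_assoc ::
  "('k::field \<Rightarrow> 'uv::ab_group_add \<Rightarrow> 'uv) \<Rightarrow> (('u \<times> 'v \<Rightarrow>\<^sub>0 'k) \<Rightarrow> 'uv)
   \<Rightarrow> ('k \<Rightarrow> 'a::ab_group_add \<Rightarrow> 'a) \<Rightarrow> (('uv \<times> 'w \<Rightarrow>\<^sub>0 'k) \<Rightarrow> 'a)
   \<Rightarrow> (('v \<times> 'w \<Rightarrow>\<^sub>0 'k) \<Rightarrow> 'vw)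
   \<Rightarrow> ('k \<Rightarrow> 'b::ab_group_add \<Rightarrow> 'b) \<Rightarrow> (('u \<times> 'vw \<Rightarrow>\<^sub>0 'k) \<Rightarrow> 'b)
   \<Rightarrow> 'a \<Rightarrow> 'b" where
  "tensor_assoc sUV qUV sA qA qVW sB qB =
     tensor_lift sA sB qA
       (\<lambda>t c. tensor_lift sUV sB qUV (\<lambda>a b. qB (delta (a, qVW (delta (b, c))))) t)"

text \<open>Coassociativity is stated
  modulo the canonical associator; the counit laws use the canonical
  identifications k \<otimes> H \<cong> H \<cong> H \<otimes> k.\<close>

definition coalgebra ::
  "('k::field \<Rightarrow> 'h::ab_group_add \<Rightarrow> 'h)
   \<Rightarrow> ('k \<Rightarrow> 'hh::ab_group_add \<Rightarrow> 'hh) \<Rightarrow> (('h \<times> 'h \<Rightarrow>\<^sub>0 'k) \<Rightarrow> 'hh)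
   \<Rightarrow> ('k \<Rightarrow> 'a::ab_group_add \<Rightarrow> 'a) \<Rightarrow> (('hh \<times> 'h \<Rightarrow>\<^sub>0 'k) \<Rightarrow> 'a)
   \<Rightarrow> ('k \<Rightarrow> 'b::ab_group_add \<Rightarrow> 'b) \<Rightarrow> (('h \<times> 'hh \<Rightarrow>\<^sub>0 'k) \<Rightarrow> 'b)
   \<Rightarrow> ('h \<Rightarrow> 'hh) \<Rightarrow> ('h \<Rightarrow> 'k) \<Rightarrow> bool" where
  "coalgebra sH sHH qHH sA qA sB qB \<Delta> \<epsilon> \<longleftrightarrow>
     is_tensor_product sH sH sHH qHH \<and>
     is_tensor_product sHH sH sA qA \<and>
     is_tensor_product sH sHH sB qB \<and>
     Vector_Spaces.linear sH sHH \<Delta> \<and>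
     Vector_Spaces.linear sH ((*) :: 'k \<Rightarrow> 'k \<Rightarrow> 'k) \<epsilon> \<and>
     (\<forall>h. tensor_assoc sHH qHH sA qA qHH sB qB
             (tensor_map sHH sA qHH qA \<Delta> id (\<Delta> h))
          = tensor_map sHH sB qHH qB id \<Delta> (\<Delta> h)) \<and>
     (\<forall>h. tensor_lift sHH sH qHH (\<lambda>a b. sH (\<epsilon> a) b) (\<Delta> h) = h) \<and>
     (\<forall>h. tensor_lift sHH sH qHH (\<lambda>a b. sH (\<epsilon> b) a) (\<Delta> h) = h)"

definition comodule ::
  "('k::field \<Rightarrow> 'h::ab_group_add \<Rightarrow> 'h)
   \<Rightarrow> ('k \<Rightarrow> 'hh::ab_group_add \<Rightarrow> 'hh) \<Rightarrow> (('h \<times> 'h \<Rightarrow>\<^sub>0 'k) \<Rightarrow> 'hh)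
   \<Rightarrow> ('h \<Rightarrow> 'hh) \<Rightarrow> ('h \<Rightarrow> 'k)
   \<Rightarrow> ('k \<Rightarrow> 'x::ab_group_add \<Rightarrow> 'x)
   \<Rightarrow> ('k \<Rightarrow> 'xh::ab_group_add \<Rightarrow> 'xh) \<Rightarrow> (('x \<times> 'h \<Rightarrow>\<^sub>0 'k) \<Rightarrow> 'xh)
   \<Rightarrow> ('k \<Rightarrow> 'a::ab_group_add \<Rightarrow> 'a) \<Rightarrow> (('xh \<times> 'h \<Rightarrow>\<^sub>0 'k) \<Rightarrow> 'a)
   \<Rightarrow> ('k \<Rightarrow> 'b::ab_group_add \<Rightarrow> 'b) \<Rightarrow> (('x \<times> 'hh \<Rightarrow>\<^sub>0 'k) \<Rightarrow> 'b)
   \<Rightarrow> ('x \<Rightarrow> 'xh) \<Rightarrow> bool" where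
  "comodule sH sHH qHH \<Delta> \<epsilon> sX sXH qXH sA qA sB qB \<rho> \<longleftrightarrow>
     is_tensor_product sH sH sHH qHH \<and>
     is_tensor_product sX sH sXH qXH \<and>
     is_tensor_product sXH sH sA qA \<and>
     is_tensor_product sX sHH sB qB \<and>
     Vector_Spaces.linear sX sXH \<rho> \<and>
     (\<forall>x. tensor_assoc sXH qXH sA qA qHH sB qB
             (tensor_map sXH sA qXH qA \<rho> id (\<rho> x))
          = tensor_map sXH sB qXH qB id \<Delta> (\<rho> x)) \<and>
     (\<forall>x. tensor_lift sXH sX qXH (\<lambda>y h. sX (\<epsilon> h) y) (\<rho> x) = x)"

definition partial_comodule_datum ::
  "('k::field \<Rightarrow> 'h::ab_group_add \<Rightarrow> 'h)
   \<Rightarrow> ('k \<Rightarrow> 'y::ab_group_add \<Rightarrow> 'y)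
   \<Rightarrow> ('k \<Rightarrow> 'yh::ab_group_add \<Rightarrow> 'yh) \<Rightarrow> (('y \<times> 'h \<Rightarrow>\<^sub>0 'k) \<Rightarrow> 'yh)
   \<Rightarrow> ('k \<Rightarrow> 'yb::ab_group_add \<Rightarrow> 'yb) \<Rightarrow> ('yh \<Rightarrow> 'yb) \<Rightarrow> ('y \<Rightarrow> 'yb) \<Rightarrow> bool" where
  "partial_comodule_datum sH sY sYH qYH sYb \<pi> \<rho> \<longleftrightarrow>
     is_tensor_product sY sH sYH qYH \<and>
     Vector_Spaces.linear sYH sYb \<pi> \<and> surj \<pi> \<and>
     Vector_Spaces.linear sY sYb \<rho>"

definition pcd_morphism ::
  "('k::field \<Rightarrow> 'h::ab_group_add \<Rightarrow> 'h)
   \<Rightarrow> ('k \<Rightarrow> 'y::ab_group_add \<Rightarrow> 'y)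
   \<Rightarrow> ('k \<Rightarrow> 'yh::ab_group_add \<Rightarrow> 'yh) \<Rightarrow> (('y \<times> 'h \<Rightarrow>\<^sub>0 'k) \<Rightarrow> 'yh)
   \<Rightarrow> ('k \<Rightarrow> 'yb::ab_group_add \<Rightarrow> 'yb) \<Rightarrow> ('yh \<Rightarrow> 'yb) \<Rightarrow> ('y \<Rightarrow> 'yb)
   \<Rightarrow> ('k \<Rightarrow> 'x::ab_group_add \<Rightarrow> 'x)
   \<Rightarrow> ('k \<Rightarrow> 'xh::ab_group_add \<Rightarrow> 'xh) \<Rightarrow> (('x \<times> 'h \<Rightarrow>\<^sub>0 'k) \<Rightarrow> 'xh)
   \<Rightarrow> ('k \<Rightarrow> 'xb::ab_group_add \<Rightarrow> 'xb) \<Rightarrow> ('xh \<Rightarrow> 'xb) \<Rightarrow> ('x \<Rightarrow> 'xb)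
   \<Rightarrow> ('y \<Rightarrow> 'x) \<Rightarrow> ('yb \<Rightarrow> 'xb) \<Rightarrow> bool" where
  "pcd_morphism sH sY sYH qYH sYb \<pi>Y \<rho>Y sX sXH qXH sXb \<pi>X \<rho>X f fb \<longleftrightarrow>
     partial_comodule_datum sH sY sYH qYH sYb \<pi>Y \<rho>Y \<and>
     partial_comodule_datum sH sX sXH qXH sXb \<pi>X \<rho>X \<and>
     Vector_Spaces.linear sY sX f \<and> Vector_Spaces.linear sYb sXb fb \<and>
     (\<forall>y. fb (\<rho>Y y) = \<rho>X (f y)) \<and>
     (\<forall>t. fb (\<pi>Y t) = \<pi>X (tensor_map sYH sXH qYH qXH f id t))"

definition partial_subcomodule ::
  "('k::field \<Rightarrow> 'h::ab_group_add \<Rightarrow> 'h)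
   \<Rightarrow> ('k \<Rightarrow> 'y::ab_group_add \<Rightarrow> 'y)
   \<Rightarrow> ('k \<Rightarrow> 'yh::ab_group_add \<Rightarrow> 'yh) \<Rightarrow> (('y \<times> 'h \<Rightarrow>\<^sub>0 'k) \<Rightarrow> 'yh)
   \<Rightarrow> ('k \<Rightarrow> 'yb::ab_group_add \<Rightarrow> 'yb) \<Rightarrow> ('yh \<Rightarrow> 'yb) \<Rightarrow> ('y \<Rightarrow> 'yb)
   \<Rightarrow> ('k \<Rightarrow> 'x::ab_group_add \<Rightarrow> 'x)
   \<Rightarrow> ('k \<Rightarrow> 'xh::ab_group_add \<Rightarrow> 'xh) \<Rightarrow> (('x \<times> 'h \<Rightarrow>\<^sub>0 'k) \<Rightarrow> 'xh)
   \<Rightarrow> ('k \<Rightarrow> 'xb::ab_group_add \<Rightarrow> 'xb) \<Rightarrow> ('xh \<Rightarrow> 'xb) \<Rightarrow> ('x \<Rightarrow> 'xb)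
   \<Rightarrow> ('y \<Rightarrow> 'x) \<Rightarrow> ('yb \<Rightarrow> 'xb) \<Rightarrow> bool" where
  "partial_subcomodule sH sY sYH qYH sYb \<pi>Y \<rho>Y sX sXH qXH sXb \<pi>X \<rho>X f fb \<longleftrightarrow>
     pcd_morphism sH sY sYH qYH sYb \<pi>Y \<rho>Y sX sXH qXH sXb \<pi>X \<rho>X f fb \<and>
     inj f \<and> inj fb"

text \<open>A partial comodule datum is global when \<pi> is an isomorphism
  (\<pi> is linear by definition, so: bijective).\<close>

definition global_pcd ::
  "('k::field \<Rightarrow> 'h::ab_group_add \<Rightarrow> 'h)
   \<Rightarrow> ('k \<Rightarrow> 'y::ab_group_add \<Rightarrow> 'y)
   \<Rightarrow> ('k \<Rightarrow> 'yh::ab_group_add \<Rightarrow> 'yh) \<Rightarrow> (('y \<times> 'h \<Rightarrow>\<^sub>0 'k) \<Rightarrow> 'yh)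
   \<Rightarrow> ('k \<Rightarrow> 'yb::ab_group_add \<Rightarrow> 'yb) \<Rightarrow> ('yh \<Rightarrow> 'yb) \<Rightarrow> ('y \<Rightarrow> 'yb) \<Rightarrow> bool" where
  "global_pcd sH sY sYH qYH sYb \<pi> \<rho> \<longleftrightarrow>
     partial_comodule_datum sH sY sYH qYH sYb \<pi> \<rho> \<and> bij \<pi>"

end

theory Submission
  imports Defs
begin

lemma linear_iff':
  "Vector_Spaces.linear s1 s2 f \<longleftrightarrow> vector_space s1 \<and> vector_space s2 \<and>
     (\<forall>x y. f (x+y) = f x + f y) \<and> (\<forall>c x. f (s1 c x) = s2 c (f x))"
  by (simp add: module_hom_iff_linear[symmetric] module_hom_iff module_iff_vector_space)

lemma additive_diff:
  fixes f :: "'a::ab_group_add \<Rightarrow> 'b::ab_group_add"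
  assumes "\<forall>x y. f (x+y) = f x + f y"
  shows "f (a - b) = f a - (f b :: 'b)"
proof -
  have "f a = f (a - b) + f b" using spec[OF spec[OF assms, of "a - b"], of b] by simp
  then show ?thesis by (simp add: eq_diff_eq)
qed

lemma lookup_fscale: "Poly_Mapping.lookup (fscale c p) x = c * Poly_Mapping.lookup p x"
  by (simp add: fscale_def Poly_Mapping.map.rep_eq when_def)

lemma keys_fscale: "Poly_Mapping.keys (fscale c p) \<subseteq> Poly_Mapping.keys p"
  by (auto simp: in_keys_iff lookup_fscale)

lemma pm_expand: "p = (\<Sum>x\<in>Poly_Mapping.keys p. fscale (Poly_Mapping.lookup p x) (delta x))"
proof (rule poly_mapping_eqI)
  fix y
  show "Poly_Mapping.lookup p y = Poly_Mapping.lookup (\<Sum>x\<in>Poly_Mapping.keys p. fscale (Poly_Mapping.lookup p x) (delta x)) y"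
  proof -
    have "(\<Sum>x\<in>Poly_Mapping.keys p. Poly_Mapping.lookup p x * (if x = y then 1 else 0))
       = (\<Sum>x\<in>Poly_Mapping.keys p. if x = y then Poly_Mapping.lookup p x else 0)"
      by (rule sum.cong) auto
    then show ?thesis
      by (simp add: lookup_sum lookup_fscale delta_def lookup_single when_def in_keys_iff)
  qed
qed

lemma span_delta:
  assumes "vector_space (fscale :: 'k::field \<Rightarrow> ('a \<Rightarrow>\<^sub>0 'k) \<Rightarrow> _)"
  shows "(p :: 'a \<Rightarrow>\<^sub>0 'k) \<in> module.span fscale (range delta)"
proof -
  interpret vector_space "fscale :: 'k \<Rightarrow> ('a \<Rightarrow>\<^sub>0 'k) \<Rightarrow> _" by fact
  have "(\<Sum>x\<in>Poly_Mapping.keys p. fscale (Poly_Mapping.lookup p x) (delta x)) \<in> span (range delta)"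
    by (intro span_sum span_scale span_base) auto
  then show ?thesis using pm_expand[of p] by simp
qed

lemma tp_facts:
  fixes q :: "('v::ab_group_add \<times> 'w::ab_group_add \<Rightarrow>\<^sub>0 'k::field) \<Rightarrow> 't::ab_group_add"
  assumes "is_tensor_product sV sW sT q"
  shows "vector_space (fscale :: 'k \<Rightarrow> ('v \<times> 'w \<Rightarrow>\<^sub>0 'k) \<Rightarrow> _)" "vector_space sT" "\<forall>x y. q (x+y) = q x + q y"
    "\<forall>c x. q (fscale c x) = sT c (q x)" "surj q"
    "\<And>p. q p = 0 \<longleftrightarrow> p \<in> module.span fscale (tensor_rels sV sW)"
  using assms unfolding is_tensor_product_def linear_iff' by auto

lemma tp_rel:
  fixes q :: "('v::ab_group_add \<times> 'w::ab_group_add \<Rightarrow>\<^sub>0 'k::field) \<Rightarrow> 't::ab_group_add"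
  assumes "is_tensor_product sV sW sT q" "p \<in> tensor_rels sV sW"
  shows "q p = 0"
proof -
  interpret vector_space "fscale :: 'k \<Rightarrow> ('v \<times> 'w \<Rightarrow>\<^sub>0 'k) \<Rightarrow> _" using tp_facts(1)[OF assms(1)] .
  show ?thesis using assms(2) tp_facts(6)[OF assms(1)] span_base by blast
qed

lemma tp_add_left:
  assumes tp: "is_tensor_product sV sW sT q"
  shows "q (delta (v + v', w)) = q (delta (v, w)) + q (delta (v', w))"
proof -
  have "q (delta (v + v', w) - delta (v, w) - delta (v', w)) = 0"
    by (rule tp_rel[OF tp]) (unfold tensor_rels_def, blast)
  then show ?thesis using additive_diff[OF tp_facts(3)[OF tp]] by (simp add: diff_eq_eq add.commute)
qed

lemma tp_add_right:
  assumes tp: "is_tensor_product sV sW sT q"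
  shows "q (delta (v, w + w')) = q (delta (v, w)) + q (delta (v, w'))"
proof -
  have "q (delta (v, w + w') - delta (v, w) - delta (v, w')) = 0"
    by (rule tp_rel[OF tp]) (unfold tensor_rels_def, blast)
  then show ?thesis using additive_diff[OF tp_facts(3)[OF tp]] by (simp add: diff_eq_eq add.commute)
qed

lemma tp_scale_left:
  assumes tp: "is_tensor_product sV sW sT q"
  shows "q (delta (sV c v, w)) = sT c (q (delta (v, w)))"
proof -
  have "q (delta (sV c v, w) - fscale c (delta (v, w))) = 0"
    by (rule tp_rel[OF tp]) (unfold tensor_rels_def, blast)
  then show ?thesis using additive_diff[OF tp_facts(3)[OF tp]] tp_facts(4)[OF tp] by simp
qed

lemma tp_scale_right:
  assumes tp: "is_tensor_product sV sW sT q"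
  shows "q (delta (v, sW c w)) = sT c (q (delta (v, w)))"
proof -
  have "q (delta (v, sW c w) - fscale c (delta (v, w))) = 0"
    by (rule tp_rel[OF tp]) (unfold tensor_rels_def, blast)
  then show ?thesis using additive_diff[OF tp_facts(3)[OF tp]] tp_facts(4)[OF tp] by simp
qed

lemma tl_unique:
  fixes q :: "('v::ab_group_add \<times> 'w::ab_group_add \<Rightarrow>\<^sub>0 'k::field) \<Rightarrow> 't::ab_group_add"
  assumes tp: "is_tensor_product sV sW sT q"
    and F: "Vector_Spaces.linear sT sU F" and F': "Vector_Spaces.linear sT sU F'"
    and eq: "\<And>v w. F (q (delta (v, w))) = F' (q (delta (v, w)))"
  shows "F = F'"
proof
  fix t
  obtain p where t: "t = q p" using tp_facts(5)[OF tp] by (metis surjD)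
  have lq: "Vector_Spaces.linear fscale sT q" using tp unfolding is_tensor_product_def by auto
  have l1: "Vector_Spaces.linear fscale sU (F \<circ> q)" by (rule Vector_Spaces.linear_compose[OF lq F])
  have l2: "Vector_Spaces.linear fscale sU (F' \<circ> q)" by (rule Vector_Spaces.linear_compose[OF lq F'])
  have vp: "vector_space_pair (fscale :: 'k \<Rightarrow> ('v \<times> 'w \<Rightarrow>\<^sub>0 'k) \<Rightarrow> _) sU"
    using l1 unfolding linear_iff' vector_space_pair_def by auto
  have "(F \<circ> q) p = (F' \<circ> q) p"
    by (rule vector_space_pair.linear_eq_on_span[OF vp l1 l2 _ span_delta[OF tp_facts(1)[OF tp]]])
      (auto simp: eq)
  then show "F t = F' t" by (simp add: t)
qed


definition lin_ext :: "('k::field \<Rightarrow> 'u::ab_group_add \<Rightarrow> 'u) \<Rightarrow> ('a \<Rightarrow> 'u) \<Rightarrow> ('a \<Rightarrow>\<^sub>0 'k) \<Rightarrow> 'u" where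
  "lin_ext sU b p = (\<Sum>x\<in>Poly_Mapping.keys p. sU (Poly_Mapping.lookup p x) (b x))"

lemma lin_ext_linear:
  assumes vf: "vector_space (fscale :: 'k::field \<Rightarrow> ('a \<Rightarrow>\<^sub>0 'k) \<Rightarrow> _)"
    and vU: "vector_space (sU :: 'k \<Rightarrow> 'u::ab_group_add \<Rightarrow> 'u)"
  shows "Vector_Spaces.linear (fscale :: 'k \<Rightarrow> ('a \<Rightarrow>\<^sub>0 'k) \<Rightarrow> _) sU (lin_ext sU b)"
proof -
  interpret U: vector_space sU by fact
  have add: "lin_ext sU b (x + y) = lin_ext sU b x + lin_ext sU b y" for x y :: "'a \<Rightarrow>\<^sub>0 'k"
    unfolding lin_ext_def
    by (rule setsum_keys_plus_distrib) (auto simp: U.scale_left_distrib)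
  have sc: "lin_ext sU b (fscale c x) = sU c (lin_ext sU b x)" for c and x :: "'a \<Rightarrow>\<^sub>0 'k"
  proof -
    have "lin_ext sU b (fscale c x) = (\<Sum>y\<in>Poly_Mapping.keys (fscale c x). sU (c * Poly_Mapping.lookup x y) (b y))"
      unfolding lin_ext_def by (simp add: lookup_fscale)
    also have "\<dots> = (\<Sum>y\<in>Poly_Mapping.keys x. sU (c * Poly_Mapping.lookup x y) (b y))"
    proof (rule sum.mono_neutral_left)
      show "finite (Poly_Mapping.keys x)" by simp
      show "Poly_Mapping.keys (fscale c x) \<subseteq> Poly_Mapping.keys x" by (rule keys_fscale)
      show "\<forall>i\<in>Poly_Mapping.keys x - Poly_Mapping.keys (fscale c x). sU (c * Poly_Mapping.lookup x i) (b i) = 0"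
        by (auto simp: in_keys_iff lookup_fscale)
    qed
    also have "\<dots> = sU c (lin_ext sU b x)"
      unfolding lin_ext_def by (simp add: U.scale_sum_right U.scale_scale)
    finally show ?thesis .
  qed
  show ?thesis unfolding linear_iff' using vf vU add sc by blast
qed

lemma lin_ext_delta:
  assumes vU: "vector_space (sU :: 'k::field \<Rightarrow> 'u::ab_group_add \<Rightarrow> 'u)"
  shows "lin_ext sU b (delta x :: 'a \<Rightarrow>\<^sub>0 'k) = b x"
proof -
  interpret U: vector_space sU by fact
  show ?thesis by (simp add: lin_ext_def delta_def)
qed

lemma tl_exists:
  fixes q :: "('v::ab_group_add \<times> 'w::ab_group_add \<Rightarrow>\<^sub>0 'k::field) \<Rightarrow> 't::ab_group_add"
    and sU :: "'k \<Rightarrow> 'u::ab_group_add \<Rightarrow> 'u"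
  assumes tp: "is_tensor_product sV sW sT q" and vU: "vector_space sU"
    and b1: "\<And>v v' w. \<beta> (v + v') w = \<beta> v w + \<beta> v' w"
    and b2: "\<And>v w w'. \<beta> v (w + w') = \<beta> v w + \<beta> v w'"
    and b3: "\<And>c v w. \<beta> (sV c v) w = sU c (\<beta> v w)"
    and b4: "\<And>c v w. \<beta> v (sW c w) = sU c (\<beta> v w)"
  shows "\<exists>F. Vector_Spaces.linear sT sU F \<and> (\<forall>v w. F (q (delta (v, w))) = \<beta> v w)"
proof -
  define G where "G = lin_ext sU (case_prod \<beta>)"
  have vf: "vector_space (fscale :: 'k \<Rightarrow> ('v \<times> 'w \<Rightarrow>\<^sub>0 'k) \<Rightarrow> _)" by (rule tp_facts(1)[OF tp])
  have lG: "Vector_Spaces.linear (fscale :: 'k \<Rightarrow> ('v \<times> 'w \<Rightarrow>\<^sub>0 'k) \<Rightarrow> _) sU G"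
    unfolding G_def by (rule lin_ext_linear[OF vf vU])
  have Gadd: "\<forall>x y. G (x + y) = G x + G y" and Gsc: "\<forall>c x. G (fscale c x) = sU c (G x)"
    using lG unfolding linear_iff' by auto
  note Gdiff = additive_diff[OF Gadd]
  have Gd: "G (delta (v, w)) = \<beta> v w" for v w
    unfolding G_def by (simp add: lin_ext_delta[OF vU])
  have Grel: "G p = 0" if "p \<in> tensor_rels sV sW" for p
    using that unfolding tensor_rels_def
    by (auto simp: Gdiff Gd Gsc b1 b2 b3 b4)
  have mh: "module_hom (fscale :: 'k \<Rightarrow> ('v \<times> 'w \<Rightarrow>\<^sub>0 'k) \<Rightarrow> _) sU G"
    using lG by (simp add: module_hom_iff_linear)
  have Gspan: "G p = 0" if "p \<in> module.span fscale (tensor_rels sV sW)" for p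
    by (rule module_hom.eq_0_on_span[OF mh Grel that])
  have Gwd: "G p = G p'" if "q p = q p'" for p p'
  proof -
    have "q (p - p') = 0" using that additive_diff[OF tp_facts(3)[OF tp]] by simp
    then have "G (p - p') = 0" using Gspan tp_facts(6)[OF tp] by blast
    then show ?thesis by (simp add: Gdiff)
  qed
  define F where "F t = G (SOME p. q p = t)" for t
  have qs: "q (SOME p. q p = t) = t" for t
    using tp_facts(5)[OF tp] by (metis (mono_tags, lifting) someI_ex surjD)
  have Fq: "F (q p) = G p" for p
    unfolding F_def by (rule Gwd) (simp add: qs)
  have Fadd: "F (x + y) = F x + F y" for x y
  proof -
    obtain px py where x: "x = q px" and y: "y = q py"
      using tp_facts(5)[OF tp] by (metis surjD)
    have "x + y = q (px + py)" using x y tp_facts(3)[OF tp] by simp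
    then show ?thesis using Fq x y Gadd by simp
  qed
  have Fsc: "F (sT c x) = sU c (F x)" for c x
  proof -
    obtain px where x: "x = q px"
      using tp_facts(5)[OF tp] by (metis surjD)
    have "sT c x = q (fscale c px)" using x tp_facts(4)[OF tp] by simp
    then show ?thesis using Fq x Gsc by simp
  qed
  have "Vector_Spaces.linear sT sU F"
    unfolding linear_iff' using tp_facts(2)[OF tp] vU Fadd Fsc by blast
  moreover have "\<forall>v w. F (q (delta (v, w))) = \<beta> v w" using Fq Gd by simp
  ultimately show ?thesis by blast
qed

lemma tl_char:
  fixes q :: "('v::ab_group_add \<times> 'w::ab_group_add \<Rightarrow>\<^sub>0 'k::field) \<Rightarrow> 't::ab_group_add"
    and sU :: "'k \<Rightarrow> 'u::ab_group_add \<Rightarrow> 'u"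
  assumes tp: "is_tensor_product sV sW sT q" and vU: "vector_space sU"
    and b1: "\<And>v v' w. \<beta> (v + v') w = \<beta> v w + \<beta> v' w"
    and b2: "\<And>v w w'. \<beta> v (w + w') = \<beta> v w + \<beta> v w'"
    and b3: "\<And>c v w. \<beta> (sV c v) w = sU c (\<beta> v w)"
    and b4: "\<And>c v w. \<beta> v (sW c w) = sU c (\<beta> v w)"
  shows "Vector_Spaces.linear sT sU (tensor_lift sT sU q \<beta>) \<and>
    (\<forall>v w. tensor_lift sT sU q \<beta> (q (delta (v, w))) = \<beta> v w)"
proof -
  have "\<exists>!F. Vector_Spaces.linear sT sU F \<and> (\<forall>v w. F (q (delta (v, w))) = \<beta> v w)"
  proof (rule ex_ex1I)
    show "\<exists>F. Vector_Spaces.linear sT sU F \<and> (\<forall>v w. F (q (delta (v, w))) = \<beta> v w)"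
      using tl_exists[where \<beta>=\<beta> and sU=sU and q=q, OF tp vU b1 b2 b3 b4] by blast
  next
    fix F F' assume "Vector_Spaces.linear sT sU F \<and> (\<forall>v w. F (q (delta (v, w))) = \<beta> v w)"
      "Vector_Spaces.linear sT sU F' \<and> (\<forall>v w. F' (q (delta (v, w))) = \<beta> v w)"
    then show "F = F'" using tl_unique[OF tp, of sU F F'] by auto
  qed
  then show ?thesis unfolding tensor_lift_def by (rule theI')
qed

lemma tm_char:
  fixes q :: "('v::ab_group_add \<times> 'w::ab_group_add \<Rightarrow>\<^sub>0 'k::field) \<Rightarrow> 't::ab_group_add"
    and q' :: "('v2::ab_group_add \<times> 'w2::ab_group_add \<Rightarrow>\<^sub>0 'k) \<Rightarrow> 't2::ab_group_add"
  assumes tp: "is_tensor_product sV sW sT q" and tp': "is_tensor_product sV' sW' sT' q'"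
    and f: "Vector_Spaces.linear sV sV' f" and g: "Vector_Spaces.linear sW sW' g"
  shows "Vector_Spaces.linear sT sT' (tensor_map sT sT' q q' f g) \<and>
    (\<forall>v w. tensor_map sT sT' q q' f g (q (delta (v, w))) = q' (delta (f v, g w)))"
  unfolding tensor_map_def
proof (rule tl_char[OF tp tp_facts(2)[OF tp']])
  have fa: "f (x + y) = f x + f y" "f (sV c x) = sV' c (f x)" for x y c
    using f unfolding linear_iff' by auto
  have ga: "g (x + y) = g x + g y" "g (sW c x) = sW' c (g x)" for x y c
    using g unfolding linear_iff' by auto
  show "\<And>v v' w. q' (delta (f (v + v'), g w)) = q' (delta (f v, g w)) + q' (delta (f v', g w))"
    by (simp add: fa tp_add_left[OF tp'])
  show "\<And>v w w'. q' (delta (f v, g (w + w'))) = q' (delta (f v, g w)) + q' (delta (f v, g w'))"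
    by (simp add: ga tp_add_right[OF tp'])
  show "\<And>c v w. q' (delta (f (sV c v), g w)) = sT' c (q' (delta (f v, g w)))"
    by (simp add: fa tp_scale_left[OF tp'])
  show "\<And>c v w. q' (delta (f v, g (sW c w))) = sT' c (q' (delta (f v, g w)))"
    by (simp add: ga tp_scale_right[OF tp'])
qed

theorem mainTheorem8:
  fixes sH :: "'k::field \<Rightarrow> 'h::ab_group_add \<Rightarrow> 'h"
    and sHH :: "'k \<Rightarrow> 'hh::ab_group_add \<Rightarrow> 'hh" and qHH :: "('h \<times> 'h \<Rightarrow>\<^sub>0 'k) \<Rightarrow> 'hh"
    and sHA :: "'k \<Rightarrow> 'ha::ab_group_add \<Rightarrow> 'ha" and qHA :: "('hh \<times> 'h \<Rightarrow>\<^sub>0 'k) \<Rightarrow> 'ha"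
    and sHB :: "'k \<Rightarrow> 'hb::ab_group_add \<Rightarrow> 'hb" and qHB :: "('h \<times> 'hh \<Rightarrow>\<^sub>0 'k) \<Rightarrow> 'hb"
    and \<Delta> :: "'h \<Rightarrow> 'hh" and \<epsilon> :: "'h \<Rightarrow> 'k"
    and sX :: "'k \<Rightarrow> 'x::ab_group_add \<Rightarrow> 'x"
    and sXH :: "'k \<Rightarrow> 'xh::ab_group_add \<Rightarrow> 'xh" and qXH :: "('x \<times> 'h \<Rightarrow>\<^sub>0 'k) \<Rightarrow> 'xh"
    and sXA :: "'k \<Rightarrow> 'xa::ab_group_add \<Rightarrow> 'xa" and qXA :: "('xh \<times> 'h \<Rightarrow>\<^sub>0 'k) \<Rightarrow> 'xa"
    and sXB :: "'k \<Rightarrow> 'xb::ab_group_add \<Rightarrow> 'xb" and qXB :: "('x \<times> 'hh \<Rightarrow>\<^sub>0 'k) \<Rightarrow> 'xb"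
    and \<rho>X :: "'x \<Rightarrow> 'xh"
    and sY :: "'k \<Rightarrow> 'y::ab_group_add \<Rightarrow> 'y"
    and sYH :: "'k \<Rightarrow> 'yh::ab_group_add \<Rightarrow> 'yh" and qYH :: "('y \<times> 'h \<Rightarrow>\<^sub>0 'k) \<Rightarrow> 'yh"
    and sYb :: "'k \<Rightarrow> 'yb::ab_group_add \<Rightarrow> 'yb"
    and \<pi>Y :: "'yh \<Rightarrow> 'yb" and \<rho>Y :: "'y \<Rightarrow> 'yb"
    and f :: "'y \<Rightarrow> 'x" and fb :: "'yb \<Rightarrow> 'xh"
  assumes "coalgebra sH sHH qHH sHA qHA sHB qHB \<Delta> \<epsilon>"
    and "comodule sH sHH qHH \<Delta> \<epsilon> sX sXH qXH sXA qXA sXB qXB \<rho>X"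
    and "partial_subcomodule sH sY sYH qYH sYb \<pi>Y \<rho>Y sX sXH qXH sXH id \<rho>X f fb"
  shows "global_pcd sH sY sYH qYH sYb \<pi>Y \<rho>Y"
proof -
  from assms(3) have
    tpY: "is_tensor_product sY sH sYH qYH" and pY: "partial_comodule_datum sH sY sYH qYH sYb \<pi>Y \<rho>Y"
    and tpX: "is_tensor_product sX sH sXH qXH"
    and lf: "Vector_Spaces.linear sY sX f"
    and comm: "\<forall>t. fb (\<pi>Y t) = id (tensor_map sYH sXH qYH qXH f id t)"
    and sP: "surj \<pi>Y"
    unfolding partial_subcomodule_def pcd_morphism_def partial_comodule_datum_def by auto
  have vH: "vector_space sH" and vX: "vector_space sX" and vY: "vector_space sY"
    using tpX tpY unfolding is_tensor_product_def by auto
  have lid: "Vector_Spaces.linear sH sH id" using vH by (rule vector_space.linear_id)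
  have inj_f: "inj f" using assms(3) unfolding partial_subcomodule_def by auto
  have vp: "vector_space_pair sY sX" using vX vY by (simp add: vector_space_pair_def)
  obtain g where lg: "Vector_Spaces.linear sX sY g" and gf: "g \<circ> f = id"
    using vector_space_pair.linear_injective_left_inverse[OF vp lf inj_f] by blast
  define T1 where "T1 = tensor_map sYH sXH qYH qXH f id"
  define T2 where "T2 = tensor_map sXH sYH qXH qYH g id"
  have T1: "Vector_Spaces.linear sYH sXH T1" "\<And>v w. T1 (qYH (delta (v, w))) = qXH (delta (f v, w))"
    using tm_char[OF tpY tpX lf lid] unfolding T1_def by auto
  have T2: "Vector_Spaces.linear sXH sYH T2" "\<And>v w. T2 (qXH (delta (v, w))) = qYH (delta (g v, w))"
    using tm_char[OF tpX tpY lg lid] unfolding T2_def by auto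
  have vYH: "vector_space sYH" by (rule tp_facts(2)[OF tpY])
  have gfv: "g (f v) = v" for v using gf by (metis comp_apply id_apply)
  have TT: "T2 \<circ> T1 = id"
  proof (rule tl_unique[OF tpY])
    show "Vector_Spaces.linear sYH sYH (T2 \<circ> T1)" by (rule Vector_Spaces.linear_compose[OF T1(1) T2(1)])
    show "Vector_Spaces.linear sYH sYH id" using vYH by (rule vector_space.linear_id)
    show "\<And>v w. (T2 \<circ> T1) (qYH (delta (v, w))) = id (qYH (delta (v, w)))"
      by (simp add: T1(2) T2(2) gfv)
  qed
  have "inj \<pi>Y"
  proof (rule injI)
    fix a b assume "\<pi>Y a = \<pi>Y b"
    then have "T1 a = T1 b" using comm unfolding T1_def by (metis id_apply)
    then have "(T2 \<circ> T1) a = (T2 \<circ> T1) b" by simp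
    then show "a = b" using TT by simp
  qed
  then show ?thesis unfolding global_pcd_def bij_def using pY sP by simp
qed

end
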